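(* Let $m$ be a positive integer and $e$ an integer with $1<e<3^m-1$. If $x^e$ is APN over $\mathrm{GF}(3^m)$, then the ternary cyclic code $\mathcal{C}_{(1,e)}$ has parameters $[3^m-1,\,3^m-1-2m,\,4]$.
   Context: Let $q=3^m$, $n=q-1$, $\alpha$ a generator of $\mathrm{GF}(q)^*$, and $m_a(x)$ the minimal polynomial of $a\in\mathrm{GF}(q)$ over $\mathrm{GF}(3)$. $C_j$ denotes the $3$-cyclotomic coset modulo $n$ containing $j$, i.e. $\{j,3j,3^2j,\dots\}$ mod $n$. For $1<e<q-1$ with $e\notin C_1$, $\mathcal{C}_{(1,e)}$ is the cyclic code of length $n$ over $\mathrm{GF}(3)$ with generator polynomial $m_\alpha(x)m_{\alpha^e}(x)$ (when $x^e$ is APN one has $e\notin C_1$). A function $f$ on $\mathrm{GF}(q)$ is APN if $\max_{a\in\mathrm{GF}(q)^*}\max_{b\in\mathrm{GF}(q)}|\{x\in\mathrm{GF}(q): f(x+a)-f(x)=b\}|=2$. *)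

theory Defs
  imports "HOL-Computational_Algebra.Polynomial"
begin

text \<open>GF(3) viewed as the prime subfield of a field of characteristic 3:
  the roots of x^3 - x.\<close>
definition gf3 :: "'a::field set" where
  "gf3 = {x. x ^ 3 = x}"

definition min_poly3 :: "'a::field \<Rightarrow> 'a poly" where
  "min_poly3 a = (THE p. lead_coeff p = 1 \<and> set (coeffs p) \<subseteq> gf3 \<and> poly p a = 0 \<and>
      (\<forall>q. q \<noteq> 0 \<and> set (coeffs q) \<subseteq> gf3 \<and> poly q a = 0 \<longrightarrow> degree p \<le> degree q))"

definition cyclic_code :: "nat \<Rightarrow> 'a::field poly \<Rightarrow> 'a poly set" where
  "cyclic_code n g = {c. set (coeffs c) \<subseteq> gf3 \<and> degree c < n \<and> g dvd c}"

definition hamming_wt :: "'a::zero poly \<Rightarrow> nat" where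
  "hamming_wt c = card {i. coeff c i \<noteq> 0}"

definition code_1e :: "nat \<Rightarrow> 'a::field \<Rightarrow> nat \<Rightarrow> 'a poly set" where
  "code_1e n \<alpha> e = cyclic_code n (min_poly3 \<alpha> * min_poly3 (\<alpha> ^ e))"

definition APN :: "('a::{field,finite} \<Rightarrow> 'a) \<Rightarrow> bool" where
  "APN f \<longleftrightarrow> Max {card {x. f (x + a) - f x = b} | a b. a \<noteq> 0} = 2"

definition has_params :: "'a::field poly set \<Rightarrow> nat \<Rightarrow> nat \<Rightarrow> nat \<Rightarrow> bool" where
  "has_params C n k d \<longleftrightarrow> (\<forall>c\<in>C. degree c < n \<and> set (coeffs c) \<subseteq> gf3) \<and>
     card C = 3 ^ k \<and> d = Min {hamming_wt c | c. c \<in> C \<and> c \<noteq> 0}"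

end

theory Submission
  imports Defs "HOL-Computational_Algebra.Primes" "HOL-Library.FuncSet"
begin

locale ctx =
  fixes \<alpha> :: "'a::{field,finite}" and m e :: nat
  assumes m_pos: "m > 0"
    and card_q: "card (UNIV :: 'a set) = 3 ^ m"
    and gen: "\<forall>x::'a. x \<noteq> 0 \<longrightarrow> (\<exists>k. x = \<alpha> ^ k)"
    and e_gt: "1 < e" and e_lt: "e < 3 ^ m - 1"
    and apn: "APN (\<lambda>x::'a. x ^ e)"
begin

lemma pow_card: "(x::'a) ^ card (UNIV :: 'a set) = x"
proof (cases "x = 0")
  case False
  have "x * (\<Prod>y\<in>UNIV-{0}. x * y) = x * x ^ (card (UNIV :: 'a set) - 1) * \<Prod>(UNIV-{0})"
    by (simp add: prod.distrib mult_ac)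
  also have "x * x ^ (card (UNIV :: 'a set) - 1) = x ^ Suc (card (UNIV :: 'a set) - 1)"
    by (subst power_Suc) auto
  also have "Suc (card (UNIV :: 'a set) - 1) = card (UNIV :: 'a set)"
    using finite_UNIV_card_ge_0[where ?'a = 'a] by simp
  also have "(\<Prod>y\<in>UNIV-{0}. x * y) = (\<Prod>y\<in>UNIV-{0}. y)"
    by (rule prod.reindex_bij_witness[of _ "\<lambda>y. y / x" "\<lambda>y. x * y"]) (use False in auto)
  finally show ?thesis
    by simp
qed (use finite_UNIV_card_ge_0[where ?'a = 'a] in auto)

lemma card_ge2: "card (UNIV::'a set) \<ge> 2"
proof -
  have "{0::'a, 1} \<subseteq> UNIV" by simp
  then have "card {0::'a, 1} \<le> card (UNIV::'a set)" by (intro card_mono) auto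
  then show ?thesis by simp
qed

lemma q_zero: "(of_nat (card (UNIV::'a set)) :: 'a) = 0"
proof (rule ccontr)
  assume nz: "(of_nat (card (UNIV::'a set)) :: 'a) \<noteq> 0"
  define q where "q = card (UNIV::'a set)"
  have q2: "q \<ge> 2" unfolding q_def by (rule card_ge2)
  define P :: "'a poly" where "P = [:1, 1:] ^ q - Polynomial.monom 1 q - 1"
  have ev: "poly P x = 0" for x
    unfolding P_def using pow_card[of "1 + x"] pow_card[of x] by (simp add: poly_monom q_def)
  have "coeff P (q - 1) = of_nat (q choose (q - 1))"
    unfolding P_def using q2 by (simp add: coeff_linear_poly_power coeff_monom)
  also have "q choose (q - 1) = q" using binomial_symmetric[of "q - 1" q] q2 by simp
  finally have P0: "P \<noteq> 0" using nz unfolding q_def by auto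
  have "degree P \<le> q - 1"
  proof (rule degree_le, intro allI impI)
    fix i assume "q - 1 < i"
    then have i: "q \<le> i" by simp
    show "coeff P i = 0"
    proof (cases "i = q")
      case True then show ?thesis unfolding P_def using q2 by (simp add: coeff_linear_poly_power coeff_monom)
    next
      case False
      have "degree ([:1, 1::'a:] ^ q) = q" by (rule degree_linear_power)
      then have "degree ([:1, 1::'a:] ^ q) < i" using i False by simp
      then have "coeff ([:1, 1::'a:] ^ q) i = 0" by (rule coeff_eq_0)
      then show ?thesis unfolding P_def using False q2 i by (simp add: coeff_monom)
    qed
  qed
  moreover have "card {x. poly P x = 0} \<le> degree P" by (rule card_poly_roots_bound[OF P0])
  moreover have "{x. poly P x = 0} = UNIV" using ev by auto
  ultimately show False using q2 unfolding q_def by simp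
qed

lemma CHAR3: "CHAR('a) = 3"
proof -
  have "CHAR('a) dvd 3 ^ m" using q_zero card_q of_nat_eq_0_iff_char_dvd by metis
  moreover have "prime CHAR('a)"
    using prime_CHAR_semidom[where 'a='a] finite_imp_CHAR_pos[where 'a='a] by auto
  ultimately have "CHAR('a) dvd 3" using prime_dvd_power by blast
  with \<open>prime CHAR('a)\<close> show ?thesis
    using primes_dvd_imp_eq[of "CHAR('a)" 3] by auto
qed

lemma three0: "(3::'a) = 0"
proof -
  have "(of_nat CHAR('a) :: 'a) = 0" by (rule of_nat_CHAR)
  then have "(of_nat 3 :: 'a) = 0" unfolding CHAR3 .
  then show ?thesis by simp
qed

lemma primeC: "prime CHAR('a)" unfolding CHAR3 by simp

lemma frob_add: "(x + y :: 'a) ^ 3 = x ^ 3 + y ^ 3"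
  by (rule freshmans_dream[OF primeC]) (simp add: CHAR3)

lemma frob_add_pow: "(x + y :: 'a) ^ (3 ^ t) = x ^ (3 ^ t) + y ^ (3 ^ t)"
  by (rule freshmans_dream'[OF primeC]) (simp add: CHAR3)

lemma frob_sum_pow: "(\<Sum>i\<in>A. g i :: 'a) ^ (3 ^ t) = (\<Sum>i\<in>A. g i ^ (3 ^ t))"
  by (rule freshmans_dream_sum'[OF primeC]) (simp add: CHAR3)

lemma two_eq: "(2::'a) = -1"
proof -
  have "(2::'a) = 3 - 1" by simp
  then show ?thesis using three0 by simp
qed

lemma two_ne0: "(2::'a) \<noteq> 0"
proof
  assume "(2::'a) = 0" then have "(-1::'a) = 0" using two_eq by simp
  then show False by simp
qed

lemma neg_pow: "(-x :: 'a) ^ (3 ^ t) = - (x ^ (3 ^ t))"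
  by (simp add: power_minus_odd)

lemma frob_diff_pow: "(x - y :: 'a) ^ (3 ^ t) = x ^ (3 ^ t) - y ^ (3 ^ t)"
  using frob_add_pow[of x "-y" t] neg_pow[of y t] by simp

lemma cube_inj: "(x::'a) ^ 3 = y ^ 3 \<Longrightarrow> x = y"
proof -
  assume "x ^ 3 = y ^ 3"
  then have "(x - y) ^ (3^1) = 0" using frob_diff_pow[of x y 1] by simp
  then show "x = y" by simp
qed

lemma frobt_inj: "(x::'a) ^ (3^t) = y ^ (3^t) \<Longrightarrow> x = y"
proof -
  assume "x ^ (3^t) = y ^ (3^t)"
  then have "(x - y) ^ (3^t) = 0" using frob_diff_pow[of x y t] by simp
  then show "x = y" by simp
qed


lemma gf3_iff: "(x::'a) \<in> gf3 \<longleftrightarrow> x = 0 \<or> x = 1 \<or> x = -1"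
proof -
  have "x ^ 3 - x = x * (x - 1) * (x + 1)" by (simp add: algebra_simps power3_eq_cube)
  then have "x ^ 3 = x \<longleftrightarrow> x * (x - 1) * (x + 1) = 0" by (metis eq_iff_diff_eq_0)
  also have "\<dots> \<longleftrightarrow> x = 0 \<or> x = 1 \<or> x = -1" by (simp add: eq_neg_iff_add_eq_0)
  finally show ?thesis unfolding gf3_def by simp
qed

lemma gf3_add: "x \<in> gf3 \<Longrightarrow> y \<in> gf3 \<Longrightarrow> (x + y :: 'a) \<in> gf3"
  unfolding gf3_def using frob_add by simp

lemma gf3_mult: "x \<in> gf3 \<Longrightarrow> y \<in> gf3 \<Longrightarrow> (x * y :: 'a) \<in> gf3"
  unfolding gf3_def by (simp add: power_mult_distrib)

lemma gf3_uminus: "x \<in> gf3 \<Longrightarrow> (- x :: 'a) \<in> gf3"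
  unfolding gf3_def by (simp add: power_minus_odd)

lemma gf3_diff: "x \<in> gf3 \<Longrightarrow> y \<in> gf3 \<Longrightarrow> (x - y :: 'a) \<in> gf3"
  using gf3_add[of x "-y"] gf3_uminus[of y] by simp

lemma gf3_inverse: "x \<in> gf3 \<Longrightarrow> (inverse x :: 'a) \<in> gf3"
  unfolding gf3_def by (simp add: power_inverse)

lemma gf3_divide: "x \<in> gf3 \<Longrightarrow> y \<in> gf3 \<Longrightarrow> (x / y :: 'a) \<in> gf3"
  using gf3_mult[OF _ gf3_inverse] by (simp add: divide_inverse)

lemma gf3_0: "(0::'a) \<in> gf3" and gf3_1: "(1::'a) \<in> gf3"
  unfolding gf3_def by simp_all

lemma gf3_sum: "(\<And>i. i \<in> A \<Longrightarrow> g i \<in> gf3) \<Longrightarrow> (\<Sum>i\<in>A. g i :: 'a) \<in> gf3"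
  by (induction A rule: infinite_finite_induct) (auto simp: gf3_0 gf3_add)

lemma one_ne_m1: "(1::'a) \<noteq> -1"
proof
  assume "(1::'a) = -1" then have "(2::'a) = 0" by (simp add: eq_neg_iff_add_eq_0)
  then show False using two_ne0 by simp
qed

lemma card_gf3: "card (gf3 :: 'a set) = 3"
proof -
  have "(gf3 :: 'a set) = {0, 1, -1}" using gf3_iff by auto
  then have "card (gf3::'a set) = card {0::'a,1,-1}" by simp
  also have "\<dots> = 3" using one_ne_m1 by (auto simp: card_insert_if)
  finally show ?thesis .
qed

lemma finite_gf3: "finite (gf3 :: 'a set)" by simp

definition n :: nat where "n = 3 ^ m - 1"

lemma m_ge2: "m \<ge> 2"
proof (rule ccontr)
  assume "\<not> m \<ge> 2" then have "m = 1" using m_pos by simp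
  then show False using e_gt e_lt by simp
qed

lemma n_pos: "n > 0" unfolding n_def using m_pos
  by (metis one_less_numeral_iff one_less_power semiring_norm(77) zero_less_diff)

lemma q_eq: "3 ^ m = Suc n" unfolding n_def
  by (metis Suc_pred' zero_less_numeral zero_less_power)

lemma pow_n: "(x::'a) \<noteq> 0 \<Longrightarrow> x ^ n = 1"
proof -
  assume "x \<noteq> 0"
  have "x * x ^ n = x * 1" using pow_card[of x] card_q q_eq by simp
  then show ?thesis using \<open>x \<noteq> 0\<close> by simp
qed

lemma card_nz: "card (UNIV - {0::'a}) = n"
  using card_q q_eq by (simp add: card_Diff_singleton)

lemma alpha_nz: "\<alpha> \<noteq> 0"
proof
  assume "\<alpha> = 0"
  have "(-1::'a) \<noteq> 0" by simp
  then obtain k where "(-1::'a) = \<alpha> ^ k" using gen by blast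
  with \<open>\<alpha> = 0\<close> have "(-1::'a) = 0 \<or> (-1::'a) = 1" by (cases k) auto
  then show False using one_ne_m1 by auto
qed

lemma alpha_n: "\<alpha> ^ n = 1" using pow_n alpha_nz by simp

lemma alpha_pow_mod: "\<alpha> ^ k = \<alpha> ^ (k mod n)"
proof -
  have "\<alpha> ^ k = \<alpha> ^ (n * (k div n) + k mod n)" by simp
  also have "\<dots> = (\<alpha> ^ n) ^ (k div n) * \<alpha> ^ (k mod n)" by (simp only: power_add power_mult)
  also have "\<dots> = \<alpha> ^ (k mod n)" by (simp add: alpha_n)
  finally show ?thesis .
qed

lemma alpha_inj: assumes "i < n" "j < n" "\<alpha> ^ i = \<alpha> ^ j" shows "i = j"
proof (rule ccontr)
  assume "i \<noteq> j"
  { fix i j assume ij: "i < j" "j < n" "\<alpha> ^ i = \<alpha> ^ j"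
    define d where "d = j - i"
    have d: "0 < d" "d < n" using ij d_def by auto
    have "i + d = j" using ij d_def by simp
    then have "\<alpha> ^ i * \<alpha> ^ d = \<alpha> ^ j" by (metis power_add)
    then have "\<alpha> ^ i * \<alpha> ^ d = \<alpha> ^ i * 1" using ij(3) by simp
    then have ad: "\<alpha> ^ d = 1" using alpha_nz by simp
    have "UNIV - {0::'a} \<subseteq> (\<lambda>k. \<alpha> ^ k) ` {..<d}"
    proof
      fix x :: 'a assume "x \<in> UNIV - {0}"
      then obtain k where "x = \<alpha> ^ k" using gen by blast
      also have "\<alpha> ^ k = \<alpha> ^ (d * (k div d) + k mod d)" by simp
      also have "\<dots> = (\<alpha> ^ d) ^ (k div d) * \<alpha> ^ (k mod d)" by (simp only: power_add power_mult)
      also have "\<dots> = \<alpha> ^ (k mod d)" by (simp add: ad)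
      finally show "x \<in> (\<lambda>k. \<alpha> ^ k) ` {..<d}" using d by auto
    qed
    then have "card (UNIV - {0::'a}) \<le> card ((\<lambda>k. \<alpha> ^ k) ` {..<d})" by (intro card_mono) auto
    also have "\<dots> \<le> d" using card_image_le[of "{..<d}"] by simp
    finally have False using card_nz d by simp }
  then show False using assms \<open>i \<noteq> j\<close> by (metis linorder_neqE_nat)
qed

lemma ind_ex: "(x::'a) \<noteq> 0 \<Longrightarrow> \<exists>k<n. x = \<alpha> ^ k"
proof -
  assume "x \<noteq> 0" then obtain k where "x = \<alpha> ^ k" using gen by blast
  then have "x = \<alpha> ^ (k mod n)" using alpha_pow_mod by simp
  then show ?thesis using n_pos mod_less_divisor by blast
qed

definition D :: "'a \<Rightarrow> 'a \<Rightarrow> 'a set" where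
  "D a b = {x. (x + a) ^ e - x ^ e = b}"

lemma apn_le2: "a \<noteq> 0 \<Longrightarrow> card (D a b) \<le> 2"
  and apn_ex2: "\<exists>a b. a \<noteq> 0 \<and> card (D a b) = 2"
proof -
  let ?S = "{card {x. (x + a) ^ e - x ^ e = b} | a b. (a::'a) \<noteq> 0}"
  have fin: "finite ?S"
  proof -
    have "?S \<subseteq> (\<lambda>(a::'a,b). card {x. (x + a) ^ e - x ^ e = b}) ` UNIV"
    proof
      fix c assume "c \<in> ?S"
      then obtain a' b' :: 'a where "c = card {x. (x + a') ^ e - x ^ e = b'}"
        unfolding mem_Collect_eq by (elim exE conjE) blast
      then show "c \<in> (\<lambda>(a::'a,b). card {x. (x + a) ^ e - x ^ e = b}) ` UNIV"
        by (intro image_eqI[of _ _ "(a',b')"]) auto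
    qed
    then show ?thesis by (rule finite_subset) simp
  qed
  have "card {x. (x + 1) ^ e - x ^ e = (0::'a)} \<in> ?S"
    unfolding mem_Collect_eq by (intro exI[of _ "1::'a"] exI[of _ "0::'a"] conjI) simp_all
  then have ne: "?S \<noteq> {}" by (metis empty_iff)
  have M: "Max ?S = 2" using apn unfolding APN_def by simp
  { assume "a \<noteq> 0"
    then have "card (D a b) \<in> ?S" unfolding D_def mem_Collect_eq
      by (intro exI[of _ a] exI[of _ b] conjI) simp_all
    from Max_ge[OF fin this] M show "card (D a b) \<le> 2" by simp }
  have "2 \<in> ?S" using Max_in[OF fin ne] M by simp
  then show "\<exists>a b. a \<noteq> 0 \<and> card (D a b) = 2" unfolding D_def mem_Collect_eq
    by (elim exE conjE) (intro exI conjI, assumption, simp)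
qed

lemma three_sol: assumes "a \<noteq> 0" "x \<in> D a b" "y \<in> D a b" "z \<in> D a b"
  "x \<noteq> y" "y \<noteq> z" "x \<noteq> z" shows False
proof -
  have "{x, y, z} \<subseteq> D a b" using assms by auto
  then have "card {x,y,z} \<le> card (D a b)" by (intro card_mono) auto
  then show False using apn_le2[OF assms(1), of b] assms by simp
qed

lemma e_pos: "e > 0" using e_gt by linarith

lemma zero_pow_e: "(0::'a) ^ e = 0" using e_pos by simp

lemma D_iff: "x \<in> D a b \<longleftrightarrow> (x + a) ^ e - x ^ e = b" unfolding D_def by simp

lemma minus_two: "(-2::'a) = 1"
  using two_eq by simp

lemma e_even: "even e"
proof (rule ccontr)
  assume odd: "odd e"
  have "(0::'a) \<in> D 1 1" unfolding D_iff using zero_pow_e by simp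
  moreover have "(-1::'a) \<in> D 1 1" unfolding D_iff using odd zero_pow_e by simp
  moreover have "(1::'a) \<in> D 1 1" unfolding D_iff using odd
    by (simp add: one_add_one two_eq minus_two)
  ultimately show False using three_sol[of 1 0 1 "-1" 1] one_ne_m1 by auto
qed

lemma f_even: "(-x::'a) ^ e = x ^ e" using e_even by simp

lemma f_zero: "(x::'a) ^ e = 0 \<longleftrightarrow> x = 0" using e_pos by simp

lemma lc: "a - b = c * 3 + d \<Longrightarrow> d = 0 \<Longrightarrow> a = (b::'a)"
  using three0 by simp

lemma add3: "(a::'a) + a + a = 0"
proof -
  have "a * 3 = a * (1 + 1 + 1)" by simp
  also have "\<dots> = a + a + a" by (simp only: distrib_left mult_1_right)
  finally show ?thesis using three0 by simp
qed

lemma add2: "(a::'a) + a = - a"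
  using add3[of a] by (simp add: eq_neg_iff_add_eq_0)

lemma lemA: assumes "x \<noteq> y" "y \<noteq> z" "x \<noteq> z" "x + y + z = (0::'a)"
  "x ^ e + y ^ e + z ^ e = 0" shows False
proof -
  define a where "a = y - x"
  define b where "b = y ^ e - x ^ e"
  have a0: "a \<noteq> 0" using assms a_def by simp
  have ya: "y + a = z" unfolding a_def
    by (rule lc[where c=y and d="-(x+y+z)"]) (simp add: algebra_simps, use assms in simp)
  have za: "z + a = x" unfolding a_def
    by (rule lc[where c="-x" and d="x+y+z"]) (simp add: algebra_simps, use assms in simp)
  have 1: "x \<in> D a b" unfolding D_iff b_def a_def by simp
  have 2: "y \<in> D a b" unfolding D_iff b_def ya
    by (rule lc[where c="- (y^e)" and d="x^e+y^e+z^e"]) (simp add: algebra_simps, use assms in simp)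
  have 3: "z \<in> D a b" unfolding D_iff b_def za
    by (rule lc[where c="x^e" and d="-(x^e+y^e+z^e)"]) (simp add: algebra_simps, use assms in simp)
  show False using three_sol[OF a0 1 2 3] assms by simp
qed

lemma lemB: assumes "x \<noteq> 0" "y \<noteq> 0" "x \<noteq> y" "(x + y) ^ e = x ^ e + (y::'a) ^ e"
  shows False
proof -
  define w where "w = y * y / x"
  have 1: "0 \<in> D y (y ^ e)" unfolding D_iff using zero_pow_e by simp
  have 2: "x \<in> D y (y ^ e)" unfolding D_iff using assms by simp
  have "w + y = (y / x) * (x + y)" unfolding w_def using assms(1) by (simp add: field_simps)
  moreover have "w = (y / x) * y" unfolding w_def by simp
  ultimately have "(w + y) ^ e - w ^ e = (y / x) ^ e * (x + y) ^ e - (y / x) ^ e * y ^ e"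
    by (simp only: power_mult_distrib)
  also have "\<dots> = (y / x) ^ e * ((x + y) ^ e - y ^ e)" by (simp only: right_diff_distrib)
  also have "\<dots> = (y / x) ^ e * x ^ e" using assms(4) by simp
  also have "\<dots> = y ^ e" using assms(1) by (simp add: power_divide)
  finally have 3: "w \<in> D y (y ^ e)" unfolding D_iff .
  have w0: "w \<noteq> 0" unfolding w_def using assms by simp
  have xw: "x \<noteq> w"
  proof
    assume "x = w"
    then have "x * x = y * y" unfolding w_def using assms(1) by (simp add: field_simps)
    then have "(x - y) * (x + y) = 0" by (simp add: algebra_simps)
    then have "y = - x" using assms(3) by (simp add: eq_neg_iff_add_eq_0 add.commute)
    then have h: "x ^ e + x ^ e = 0" using assms(4) zero_pow_e f_even by simp
    have "x ^ e = 0"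
      by (rule lc[where c="x^e" and d="-(x^e + x^e)"]) (simp add: algebra_simps, use h in simp)
    then show False using f_zero assms(1) by simp
  qed
  show False using three_sol[OF assms(2) 1 2 3] assms(1) w0 xw by auto
qed

lemma lemZ: assumes "a \<noteq> 0" "t \<noteq> 0" "(t + a) ^ e - t ^ e = (a::'a) ^ e" shows False
proof (cases "t = -a")
  case True
  then have h: "- (a ^ e) = a ^ e" using assms zero_pow_e f_even by simp
  have "a ^ e = 0"
    by (rule lc[where c="a^e" and d="-(a^e) - a^e"]) (simp add: algebra_simps, use h in simp)
  then show False using f_zero assms(1) by simp
next
  case False
  show False
  proof (cases "t = a")
    case True
    have "a + a = - a" by (rule add2)
    have "(a + a) ^ e - a ^ e = a ^ e" using assms(3) True by simp
    then have "(- a) ^ e - a ^ e = a ^ e" unfolding \<open>a + a = - a\<close> .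
    then have "a ^ e = 0" using f_even by simp
    then show False using f_zero assms(1) by simp
  next
    case False
    show False by (rule lemB[of t a]) (use assms False in \<open>simp_all add: algebra_simps\<close>)
  qed
qed

lemma B3: assumes "x \<noteq> 0" "y \<noteq> 0" "x \<noteq> y" "x + y - z = (0::'a)" "x ^ e + y ^ e - z ^ e = 0"
  shows False
proof -
  have "z = x + y" using assms(4) right_minus_eq by metis
  moreover have "z ^ e = x ^ e + y ^ e" using assms(5) right_minus_eq by metis
  ultimately show False using lemB[OF assms(1-3)] by simp
qed

lemma W2: assumes "x \<noteq> 0" "x \<noteq> y" "u \<in> {1,-1}" "v \<in> {1,-1}" "u*x + v*y = (0::'a)"
  "u * x ^ e + v * y ^ e = 0" shows False
proof -
  have neg: "a + b = 0" if "- a + - b = (0::'a)" for a b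
  proof -
    have "a + b = - (- a + - b)" by simp
    also have "\<dots> = 0" unfolding that by simp
    finally show ?thesis .
  qed
  have key: "x + y = 0 \<Longrightarrow> x ^ e + y ^ e = 0 \<Longrightarrow> False"
  proof -
    assume h: "x + y = 0" "x ^ e + y ^ e = 0"
    then have "y = - x" by (simp add: eq_neg_iff_add_eq_0 add.commute)
    then have "x ^ e + x ^ e = 0" using h f_even by simp
    then have "x ^ e = 0" using add2[of "x^e"] by simp
    then show False using f_zero assms(1) by simp
  qed
  consider "u = 1" "v = 1" | "u = 1" "v = -1" | "u = -1" "v = 1" | "u = -1" "v = -1"
    using assms(3,4) by blast
  then show False
  proof cases
    case 1 then show False using key assms(5,6) by simp
  next
    case 2 then show False using assms(2,5) by simp
  next
    case 3 then have "- x + y = 0" using assms(5) by simp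
    then show False using assms(2) by (simp add: add.commute)
  next
    case 4
    have "- x + - y = 0" using assms(5) 4 by simp
    moreover have "- (x^e) + - (y^e) = 0" using assms(6) 4 by simp
    ultimately show False using key neg by blast
  qed
qed

lemma W3': assumes "x \<noteq> 0" "y \<noteq> 0" "z \<noteq> 0" "x \<noteq> y" "y \<noteq> z" "x \<noteq> z"
  "v \<in> {1,-1}" "w \<in> {1,-1}" "x + v*y + w*z = (0::'a)"
  "x ^ e + v * y ^ e + w * z ^ e = 0" shows False
proof -
  consider "v = 1" "w = 1" | "v = 1" "w = -1" | "v = -1" "w = 1" | "v = -1" "w = -1"
    using assms(7,8) by blast
  then show False
  proof cases
    case 1
    have "x + y + z = 0" using assms(9) 1 by simp
    moreover have "x^e + y^e + z^e = 0" using assms(10) 1 by simp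
    ultimately show False using lemA[of x y z] assms(4-6) by blast
  next
    case 2
    have "x + y - z = 0" using assms(9) 2 by (simp add: algebra_simps)
    moreover have "x^e + y^e - z^e = 0" using assms(10) 2 by (simp add: algebra_simps)
    ultimately show False using B3[of x y z] assms(1,2,4) by blast
  next
    case 3
    have "x + z - y = 0" using assms(9) 3 by (simp add: algebra_simps)
    moreover have "x^e + z^e - y^e = 0" using assms(10) 3 by (simp add: algebra_simps)
    ultimately show False using B3[of x z y] assms(1,3,6) by blast
  next
    case 4
    have "y + z - x = - (x + v*y + w*z)" using 4 by simp
    then have "y + z - x = 0" using assms(9) by simp
    moreover have "y^e + z^e - x^e = - (x ^ e + v * y ^ e + w * z ^ e)" using 4 by simp
    then have "y^e + z^e - x^e = 0" using assms(10) by simp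
    ultimately show False using B3[of y z x] assms(2,3,5) by blast
  qed
qed

lemma W3: assumes "x \<noteq> 0" "y \<noteq> 0" "z \<noteq> 0" "x \<noteq> y" "y \<noteq> z" "x \<noteq> z"
  "u \<in> {1,-1}" "v \<in> {1,-1}" "w \<in> {1,-1}" "u*x + v*y + w*z = (0::'a)"
  "u * x ^ e + v * y ^ e + w * z ^ e = 0" shows False
proof (cases "u = 1")
  case True then show False using W3'[of x y z v w] assms by simp
next
  case False
  then have u: "u = -1" using assms(7) by simp
  have "x + (-v)*y + (-w)*z = - (u*x + v*y + w*z)" using u by simp
  then have h1: "x + (-v)*y + (-w)*z = 0" using assms(10) by simp
  have "x^e + (-v)*y^e + (-w)*z^e = - (u * x ^ e + v * y ^ e + w * z ^ e)" using u by simp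
  then have h2: "x^e + (-v)*y^e + (-w)*z^e = 0" using assms(11) by simp
  have "-v \<in> {1,-1}" "-w \<in> {1,-1}" using assms(8,9) by auto
  then show False using W3'[OF assms(1-6) _ _ h1 h2] by blast
qed

lemma nz_lemma: assumes "a \<noteq> 0" "t1 \<in> D a b" "t2 \<in> D a b" "t1 \<noteq> t2"
  shows "t1 \<noteq> 0" "t1 + a \<noteq> 0"
proof -
  show "t1 \<noteq> 0"
  proof
    assume t1: "t1 = 0"
    then have "b = a ^ e" using assms(2) zero_pow_e unfolding D_iff by simp
    then have h: "(t2 + a) ^ e - t2 ^ e = a ^ e" using assms(3) unfolding D_iff by simp
    have "t2 \<noteq> 0" using assms(4) t1 by simp
    then show False using lemZ[OF assms(1) _ h] by simp
  qed
  show "t1 + a \<noteq> 0"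
  proof
    assume t1: "t1 + a = 0"
    then have "t1 = - a" by (simp add: eq_neg_iff_add_eq_0)
    then have b: "b = - (a ^ e)" using assms(2) zero_pow_e f_even unfolding D_iff by simp
    define t where "t = - t2 - a"
    have "t + a = - t2" unfolding t_def by simp
    then have x1: "(t + a) ^ e = t2 ^ e" using f_even by simp
    have "t = - (t2 + a)" unfolding t_def by simp
    then have x2: "t ^ e = (t2 + a) ^ e" using f_even[of "t2 + a"] by simp
    have "(t + a) ^ e - t ^ e = t2 ^ e - (t2 + a) ^ e" unfolding x1 x2 ..
    also have "\<dots> = - ((t2 + a) ^ e - t2 ^ e)" by simp
    also have "\<dots> = a ^ e" using assms(3) b unfolding D_iff by simp
    finally have h: "(t + a) ^ e - t ^ e = a ^ e" .
    have "t \<noteq> 0"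
    proof
      assume "t = 0"
      then have "- (t2 + a) = 0" unfolding t_def by simp
      then have "t2 + a = 0" by (simp only: neg_equal_0_iff_equal)
      then have "t2 = - a" by (simp add: eq_neg_iff_add_eq_0)
      then show False using assms(4) \<open>t1 = - a\<close> by simp
    qed
    then show False using lemZ[OF assms(1) _ h] by simp
  qed
qed

lemma ap_lemma: assumes "a \<noteq> 0" "t1 \<in> D a b" "t2 \<in> D a b" shows "t2 \<noteq> t1 + a"
proof
  assume t2: "t2 = t1 + a"
  have a2: "a + a \<noteq> 0" using add2[of a] assms(1) two_ne0 by simp
  have "t1 + a + a + a = t1" using add3[of a] by (simp add: add.assoc)
  have h1: "(t1 + a) ^ e - t1 ^ e = b" using assms(2) unfolding D_iff .
  have h2: "(t1 + a + a) ^ e - (t1 + a) ^ e = b" using assms(3) t2 unfolding D_iff by simp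
  have "t1 ^ e - (t1 + a + a) ^ e = b"
    by (rule lc[where c="-b" and d="- (((t1 + a) ^ e - t1 ^ e) - b) - (((t1 + a + a) ^ e - (t1 + a) ^ e) - b)"])
       (simp add: algebra_simps, simp only: h1 h2, simp)
  then have "(t1 + a + a + a) ^ e - (t1 + a + a) ^ e = b" unfolding \<open>t1 + a + a + a = t1\<close> .
  then have 3: "t1 + a + a \<in> D a b" unfolding D_iff .
  have 2: "t1 + a \<in> D a b" using assms(3) t2 by simp
  have d1: "t1 \<noteq> t1 + a" using assms(1) by simp
  have d2: "t1 + a \<noteq> t1 + a + a" using assms(1) by (metis add_0_right add_left_cancel)
  have d3: "t1 \<noteq> t1 + a + a"
  proof
    assume "t1 = t1 + a + a"
    then have "t1 + (a + a) = t1 + 0" by (simp add: add.assoc)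
    then show False using a2 by (metis add_left_cancel)
  qed
  show False using three_sol[OF assms(1,2) 2 3 d1 d2 d3] .
qed

lemma conf4: "\<exists>p1 p2 p3 p4::'a. p1 \<noteq> 0 \<and> p2 \<noteq> 0 \<and> p3 \<noteq> 0 \<and> p4 \<noteq> 0 \<and>
   p1 \<noteq> p2 \<and> p1 \<noteq> p3 \<and> p1 \<noteq> p4 \<and> p2 \<noteq> p3 \<and> p2 \<noteq> p4 \<and> p3 \<noteq> p4 \<and>
   p1 + p2 - p3 - p4 = 0 \<and> p1 ^ e + p2 ^ e - p3 ^ e - p4 ^ e = 0"
proof -
  obtain a b where a: "a \<noteq> 0" and c2: "card (D a b) = 2" using apn_ex2 by blast
  then obtain t1 t2 where tt: "D a b = {t1, t2}" "t1 \<noteq> t2" by (meson card_2_iff)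
  have t1: "t1 \<in> D a b" and t2: "t2 \<in> D a b" using tt by auto
  note n1 = nz_lemma[OF a t1 t2 tt(2)] and n2 = nz_lemma[OF a t2 t1 tt(2)[symmetric]]
  note a1 = ap_lemma[OF a t1 t2] and a2 = ap_lemma[OF a t2 t1]
  have e1: "(t1 + a) ^ e - t1 ^ e = b" and e2: "(t2 + a) ^ e - t2 ^ e = b" using t1 t2 unfolding D_iff by auto
  show ?thesis
  proof (intro exI conjI)
    show "(t1 + a) + t2 - (t2 + a) - t1 = 0" by simp
    show "(t1 + a) ^ e + t2 ^ e - (t2 + a) ^ e - t1 ^ e = 0"
    proof -
      have "(t1 + a) ^ e + t2 ^ e - (t2 + a) ^ e - t1 ^ e = ((t1 + a) ^ e - t1 ^ e) - ((t2 + a) ^ e - t2 ^ e)"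
        by (simp add: algebra_simps)
      then show ?thesis using e1 e2 by simp
    qed
  qed (use n1 n2 a1 a2 tt(2) a in auto)
qed

lemma pow_q: "(x::'a) ^ (3 ^ m) = x" using pow_card card_q by simp

definition orb :: "'a \<Rightarrow> 'a set" where "orb \<beta> = (\<lambda>t. \<beta> ^ (3 ^ t)) ` {..<m}"

lemma orb_pow: "\<beta> ^ (3 ^ k) \<in> orb \<beta>"
proof (induction k)
  case 0 then show ?case unfolding orb_def using m_pos by (auto intro!: image_eqI[of _ _ 0])
next
  case (Suc k)
  then obtain t where t: "t < m" "\<beta> ^ (3 ^ k) = \<beta> ^ (3 ^ t)" unfolding orb_def by auto
  have "\<beta> ^ (3 ^ Suc k) = (\<beta> ^ (3 ^ k)) ^ 3" by (simp add: power_mult[symmetric] mult.commute)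
  also have "\<dots> = \<beta> ^ (3 ^ Suc t)" using t by (simp add: power_mult[symmetric] mult.commute)
  finally have eq: "\<beta> ^ (3 ^ Suc k) = \<beta> ^ (3 ^ Suc t)" .
  show ?case
  proof (cases "Suc t < m")
    case True then show ?thesis unfolding orb_def eq by (intro image_eqI[of _ _ "Suc t"]) auto
  next
    case False then have "Suc t = m" using t by simp
    then have "\<beta> ^ (3 ^ Suc k) = \<beta> ^ (3 ^ 0)" using eq pow_q by simp
    then show ?thesis unfolding orb_def using m_pos by (intro image_eqI[of _ _ 0]) auto
  qed
qed

lemma orb_cube: "\<gamma> \<in> orb \<beta> \<Longrightarrow> \<gamma> ^ (3 ^ k) \<in> orb \<beta>"
proof -
  assume "\<gamma> \<in> orb \<beta>"
  then obtain t where "\<gamma> = \<beta> ^ (3 ^ t)" unfolding orb_def by auto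
  then have "\<gamma> ^ (3 ^ k) = \<beta> ^ (3 ^ (t + k))" by (simp add: power_mult[symmetric] power_add)
  then show ?thesis using orb_pow by simp
qed

lemma orb_self: "\<beta> \<in> orb \<beta>" using orb_pow[of \<beta> 0] by simp

lemma finite_orb: "finite (orb \<beta>)" unfolding orb_def by simp

lemma orb_nz: "\<beta> \<noteq> 0 \<Longrightarrow> \<gamma> \<in> orb \<beta> \<Longrightarrow> \<gamma> \<noteq> 0" unfolding orb_def by auto

lemma pow3_lt_n: "t < m \<Longrightarrow> 3 ^ t < n"
proof -
  assume "t < m"
  then have "3 ^ t \<le> (3::nat) ^ (m - 1)" by (intro power_increasing) auto
  moreover have "(3::nat) ^ m = 3 * 3 ^ (m - 1)"
  proof -
    have "m = Suc (m - 1)" using m_pos by simp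
    then have "(3::nat) ^ m = 3 ^ Suc (m - 1)" by simp
    then show ?thesis by simp
  qed
  moreover have "(3::nat) ^ (m - 1) \<ge> 1" by simp
  ultimately show ?thesis unfolding n_def by linarith
qed

lemma card_orb_alpha: "card (orb \<alpha>) = m"
proof -
  have "inj_on (\<lambda>t. \<alpha> ^ (3 ^ t)) {..<m}"
  proof
    fix i j assume "i \<in> {..<m}" "j \<in> {..<m}" "\<alpha> ^ (3 ^ i) = \<alpha> ^ (3 ^ j)"
    then have "(3::nat) ^ i = 3 ^ j" using alpha_inj pow3_lt_n by simp
    then show "i = j" by simp
  qed
  then show ?thesis unfolding orb_def by (simp add: card_image)
qed

lemma card_fix_le: assumes "s > 0" shows "card {y::'a. y ^ (3 ^ s) = y} \<le> 3 ^ s"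
proof -
  define p :: "'a poly" where "p = Polynomial.monom 1 (3 ^ s) - [:0, 1:]"
  have ev: "poly p y = 0 \<longleftrightarrow> y ^ (3 ^ s) = y" for y unfolding p_def by (simp add: poly_monom)
  have "coeff p (3 ^ s) = 1 - coeff [:0, 1:] (3 ^ s)" unfolding p_def by simp
  moreover have "coeff [:0, 1::'a:] (3 ^ s) = 0 \<or> s = 0"
    by (cases s) (auto simp: coeff_pCons split: nat.split)
  ultimately have "p \<noteq> 0 \<or> s = 0" by auto
  show ?thesis
  proof (cases "s = 0")
    case True
    then show ?thesis using assms by simp
  next
    case False
    then have p0: "p \<noteq> 0" using \<open>p \<noteq> 0 \<or> s = 0\<close> by simp
    have "degree p \<le> 3 ^ s" unfolding p_def
      by (rule order.trans[OF degree_diff_le_max]) (auto simp: degree_monom_eq)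
    moreover have "card {y. poly p y = 0} \<le> degree p" by (rule card_poly_roots_bound[OF p0])
    ultimately show ?thesis using ev by simp
  qed
qed

lemma small_range: assumes "0 < s" "s < m" "\<forall>x::'a. (x ^ e) ^ (3 ^ s) = x ^ e" shows False
proof -
  define K where "K = {y::'a. y ^ (3 ^ s) = y}"
  have U: "(UNIV::'a set) = (\<Union>b\<in>K. D 1 b)"
  proof (intro set_eqI iffI)
    fix x :: 'a
    have "((x + 1) ^ e - x ^ e) ^ (3 ^ s) = (x + 1) ^ e - x ^ e"
      using frob_diff_pow assms(3) by simp
    then have "(x + 1) ^ e - x ^ e \<in> K" unfolding K_def by simp
    moreover have "x \<in> D 1 ((x + 1) ^ e - x ^ e)" by (simp add: D_iff)
    ultimately show "x \<in> (\<Union>b\<in>K. D 1 b)" by blast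
  qed auto
  have "card (UNIV::'a set) \<le> (\<Sum>b\<in>K. card (D 1 b))"
    unfolding U by (rule card_UN_le) simp
  also have "\<dots> \<le> card K * 2" using sum_bounded_above[of K "\<lambda>b. card (D 1 b)" 2] apn_le2[of 1] by simp
  also have "\<dots> \<le> 3 ^ s * 2" using card_fix_le[of s] assms(1) unfolding K_def by simp
  also have "\<dots> \<le> 3 ^ (m - 1) * 2" using assms by (simp add: power_increasing)
  also have "\<dots> < 3 ^ m"
  proof -
    have "m = Suc (m - 1)" using m_pos by simp
    then have "(3::nat) ^ m = 3 * 3 ^ (m - 1)" by (metis power_Suc)
    then show ?thesis by simp
  qed
  finally show False using card_q by simp
qed

lemma beta_fix: "(\<alpha> ^ e) ^ (3 ^ s) = \<alpha> ^ e \<Longrightarrow> ((x::'a) ^ e) ^ (3 ^ s) = x ^ e"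
proof (cases "x = 0")
  case True then show ?thesis by (simp add: zero_pow_e)
next
  case False
  assume h: "(\<alpha> ^ e) ^ (3 ^ s) = \<alpha> ^ e"
  obtain k where "x = \<alpha> ^ k" using gen False by blast
  then have xe: "x ^ e = (\<alpha> ^ e) ^ k" by (simp add: power_mult[symmetric] mult.commute)
  have "((\<alpha> ^ e) ^ k) ^ (3 ^ s) = ((\<alpha> ^ e) ^ (3 ^ s)) ^ k"
    by (simp only: power_mult[symmetric] mult_ac)
  then show ?thesis unfolding xe h .
qed

lemma beta_noninj: assumes "i < j" "j < m" "(\<alpha> ^ e) ^ (3 ^ i) = (\<alpha> ^ e) ^ (3 ^ j)" shows False
proof -
  have "(3::nat) ^ j = 3 ^ (j - i) * 3 ^ i" using assms(1) by (simp flip: power_add)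
  then have "(\<alpha> ^ e) ^ (3 ^ j) = ((\<alpha> ^ e) ^ (3 ^ (j - i))) ^ (3 ^ i)"
    by (simp only: power_mult)
  then have "((\<alpha> ^ e) ^ (3 ^ (j - i))) ^ (3 ^ i) = (\<alpha> ^ e) ^ (3 ^ i)" using assms(3) by simp
  then have "(\<alpha> ^ e) ^ (3 ^ (j - i)) = \<alpha> ^ e" by (rule frobt_inj)
  then have "\<forall>x::'a. (x ^ e) ^ (3 ^ (j - i)) = x ^ e" using beta_fix by blast
  moreover have "j - i < m" using assms by linarith
  moreover have "0 < j - i" using assms by simp
  ultimately show False using small_range[of "j - i"] by blast
qed

lemma card_orb_beta: "card (orb (\<alpha> ^ e)) = m"
proof -
  have "inj_on (\<lambda>t. (\<alpha> ^ e) ^ (3 ^ t)) {..<m}"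
  proof
    fix i j assume ij: "i \<in> {..<m}" "j \<in> {..<m}" "(\<alpha> ^ e) ^ (3 ^ i) = (\<alpha> ^ e) ^ (3 ^ j)"
    show "i = j"
    proof (rule linorder_cases[of i j])
      assume "i < j" then show ?thesis using beta_noninj ij by auto
    next
      assume "j < i" then show ?thesis using beta_noninj[of j i] ij by auto
    qed
  qed
  then show ?thesis unfolding orb_def by (simp add: card_image)
qed

lemma pow_comm: "((x::'a) ^ a) ^ b = (x ^ b) ^ a"
  by (simp only: power_mult[symmetric] mult.commute)

lemma e_notin: "\<alpha> ^ e \<notin> orb \<alpha>"
proof
  assume "\<alpha> ^ e \<in> orb \<alpha>"
  then obtain t where t: "\<alpha> ^ e = \<alpha> ^ (3 ^ t)" unfolding orb_def by auto
  have lin: "(x::'a) ^ e = x ^ (3 ^ t)" for x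
  proof (cases "x = 0")
    case True then show ?thesis by (simp add: zero_pow_e)
  next
    case False
    then obtain k where k: "x = \<alpha> ^ k" using gen by blast
    have "x ^ e = (\<alpha> ^ e) ^ k" unfolding k by (rule pow_comm)
    also have "\<dots> = (\<alpha> ^ (3 ^ t)) ^ k" unfolding t ..
    also have "\<dots> = x ^ (3 ^ t)" unfolding k by (rule pow_comm)
    finally show ?thesis .
  qed
  have "D 1 1 = UNIV" unfolding D_def lin using frob_add_pow by simp
  then have "card (D 1 1) = 3 ^ m" using card_q by simp
  moreover have "(3::nat) ^ m \<ge> 3 ^ 1" using m_pos by (intro power_increasing) auto
  ultimately show False using apn_le2[of 1 1] by simp
qed

lemma orb_disj: "orb \<alpha> \<inter> orb (\<alpha> ^ e) = {}"
proof (rule ccontr)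
  assume "\<not> ?thesis"
  then obtain \<gamma> where g1: "\<gamma> \<in> orb \<alpha>" and g2: "\<gamma> \<in> orb (\<alpha> ^ e)" by blast
  then obtain j where j: "j < m" "\<gamma> = (\<alpha> ^ e) ^ (3 ^ j)" unfolding orb_def by auto
  have "\<gamma> ^ (3 ^ (m - j)) = (\<alpha> ^ e) ^ (3 ^ j * 3 ^ (m - j))" unfolding j by (simp add: power_mult)
  also have "3 ^ j * 3 ^ (m - j) = (3::nat) ^ m" using j by (simp flip: power_add)
  also have "(\<alpha> ^ e) ^ (3 ^ m) = \<alpha> ^ e" by (rule pow_q)
  finally have "\<alpha> ^ e = \<gamma> ^ (3 ^ (m - j))" by simp
  then have "\<alpha> ^ e \<in> orb \<alpha>" using orb_cube[OF g1] by simp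
  then show False using e_notin by simp
qed

definition Kp :: "'a poly \<Rightarrow> bool" where "Kp p \<longleftrightarrow> (\<forall>i. coeff p i \<in> gf3)"

definition frob :: "'a poly \<Rightarrow> 'a poly" where "frob p = map_poly (\<lambda>x. x ^ 3) p"

lemma coeff_frob: "coeff (frob p) i = (coeff p i) ^ 3"
  unfolding frob_def by (simp add: coeff_map_poly)

lemma Kp_frob: "Kp p \<longleftrightarrow> frob p = p"
proof
  assume "Kp p" then show "frob p = p" by (intro poly_eqI) (simp add: coeff_frob Kp_def gf3_def)
next
  assume h: "frob p = p"
  show "Kp p" unfolding Kp_def gf3_def
  proof
    fix i show "coeff p i \<in> {x. x ^ 3 = x}" using coeff_frob[of p i] h by simp
  qed
qed

lemma coeffs_Kp: "set (coeffs p) \<subseteq> gf3 \<longleftrightarrow> Kp p"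
proof
  assume h: "set (coeffs p) \<subseteq> gf3"
  show "Kp p" unfolding Kp_def
  proof
    fix i show "coeff p i \<in> gf3"
    proof (cases "p \<noteq> 0 \<and> i \<le> degree p")
      case True then show ?thesis using coeff_in_coeffs h by blast
    next
      case False then have "coeff p i = 0" by (auto simp: coeff_eq_0)
      then show ?thesis by (simp add: gf3_0)
    qed
  qed
next
  assume "Kp p" then show "set (coeffs p) \<subseteq> gf3"
    unfolding Kp_def by (auto simp: coeffs_def)
qed

lemma frob_mult: "frob (p * q) = frob p * frob q"
proof (rule poly_eqI)
  fix n
  have "coeff (frob (p * q)) n = (\<Sum>i\<le>n. coeff p i * coeff q (n - i)) ^ (3 ^ 1)"
    by (simp add: coeff_frob coeff_mult)
  also have "\<dots> = (\<Sum>i\<le>n. (coeff p i * coeff q (n - i)) ^ (3 ^ 1))" by (rule frob_sum_pow)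
  also have "\<dots> = coeff (frob p * frob q) n" by (simp add: coeff_mult coeff_frob power_mult_distrib)
  finally show "coeff (frob (p * q)) n = coeff (frob p * frob q) n" .
qed

lemma frob_one: "frob 1 = 1" unfolding frob_def by simp

lemma frob_prod: "frob (\<Prod>x\<in>A. f x) = (\<Prod>x\<in>A. frob (f x))"
  by (induction A rule: infinite_finite_induct) (simp_all add: frob_one frob_mult)

lemma frob_lin: "frob [:- c, 1:] = [:- (c ^ 3), 1:]"
  by (intro poly_eqI) (simp add: coeff_frob coeff_pCons power_minus_odd split: nat.split)

lemma Kp_mult: "Kp p \<Longrightarrow> Kp q \<Longrightarrow> Kp (p * q)" unfolding Kp_frob by (simp add: frob_mult)

lemma Kp_diff: "Kp p \<Longrightarrow> Kp q \<Longrightarrow> Kp (p - q)" unfolding Kp_def by (simp add: gf3_diff)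

lemma gf3_pow: "c \<in> gf3 \<Longrightarrow> (c::'a) ^ (3 ^ t) = c"
proof (induction t)
  case 0 then show ?case by simp
next
  case (Suc t)
  have "c ^ (3 ^ Suc t) = (c ^ (3 ^ t)) ^ 3" by (simp add: power_mult[symmetric] mult.commute)
  then show ?case using Suc by (simp add: gf3_def)
qed

lemma poly_frob: assumes "Kp p" shows "poly p (x ^ (3 ^ t)) = (poly p x) ^ (3 ^ t)"
proof -
  have "(poly p x) ^ (3 ^ t) = (\<Sum>i\<le>degree p. (coeff p i * x ^ i) ^ (3 ^ t))"
    unfolding poly_altdef by (rule frob_sum_pow)
  also have "\<dots> = (\<Sum>i\<le>degree p. coeff p i * (x ^ (3 ^ t)) ^ i)"
    using assms unfolding Kp_def by (simp add: power_mult_distrib gf3_pow pow_comm)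
  also have "\<dots> = poly p (x ^ (3 ^ t))" unfolding poly_altdef ..
  finally show ?thesis ..
qed

definition M :: "'a \<Rightarrow> 'a poly" where "M \<beta> = (\<Prod>\<gamma>\<in>orb \<beta>. [:- \<gamma>, 1:])"

lemma orb_cube_img: "(\<lambda>\<gamma>. \<gamma> ^ 3) ` orb \<beta> = orb \<beta>"
proof -
  have sub: "(\<lambda>\<gamma>. \<gamma> ^ 3) ` orb \<beta> \<subseteq> orb \<beta>" using orb_cube[of _ \<beta> 1] by auto
  have inj: "inj_on (\<lambda>\<gamma>::'a. \<gamma> ^ 3) (orb \<beta>)" using cube_inj by (auto simp: inj_on_def)
  have "card ((\<lambda>\<gamma>. \<gamma> ^ 3) ` orb \<beta>) = card (orb \<beta>)" using card_image[OF inj] .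
  then show ?thesis using card_subset_eq[OF finite_orb sub] by simp
qed

lemma Kp_M: "Kp (M \<beta>)"
proof -
  have inj: "inj_on (\<lambda>\<gamma>::'a. \<gamma> ^ 3) (orb \<beta>)" using cube_inj by (auto simp: inj_on_def)
  have "frob (M \<beta>) = (\<Prod>\<gamma>\<in>orb \<beta>. [:- (\<gamma> ^ 3), 1:])" unfolding M_def frob_prod frob_lin ..
  also have "\<dots> = (\<Prod>\<delta>\<in>(\<lambda>\<gamma>. \<gamma> ^ 3) ` orb \<beta>. [:- \<delta>, 1:])" by (simp add: prod.reindex[OF inj])
  also have "\<dots> = M \<beta>" unfolding orb_cube_img M_def ..
  finally show ?thesis unfolding Kp_frob .
qed

lemma M_nz: "M \<beta> \<noteq> 0" unfolding M_def by (simp add: finite_orb)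

lemma lead_M: "lead_coeff (M \<beta>) = 1" unfolding M_def by (simp add: lead_coeff_prod)

lemma degree_M: "degree (M \<beta>) = card (orb \<beta>)"
  unfolding M_def by (subst degree_prod_eq_sum_degree) auto

lemma poly_M: "poly (M \<beta>) \<gamma> = 0 \<longleftrightarrow> \<gamma> \<in> orb \<beta>"
  unfolding M_def by (simp add: poly_prod finite_orb)

lemma M_min: assumes "q \<noteq> 0" "Kp q" "poly q \<beta> = 0" shows "degree (M \<beta>) \<le> degree q"
proof -
  have "orb \<beta> \<subseteq> {x. poly q x = 0}"
  proof
    fix \<gamma> assume "\<gamma> \<in> orb \<beta>"
    then obtain t where "\<gamma> = \<beta> ^ (3 ^ t)" unfolding orb_def by auto
    then show "\<gamma> \<in> {x. poly q x = 0}" using poly_frob[OF assms(2)] assms(3) by simp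
  qed
  then have "card (orb \<beta>) \<le> card {x. poly q x = 0}" using poly_roots_finite[OF assms(1)] by (rule card_mono[rotated])
  also have "\<dots> \<le> degree q" by (rule card_poly_roots_bound[OF assms(1)])
  finally show ?thesis unfolding degree_M .
qed

lemma min_poly3_eq: "min_poly3 \<beta> = M \<beta>"
  unfolding min_poly3_def
proof (rule the_equality)
  show "lead_coeff (M \<beta>) = 1 \<and> set (coeffs (M \<beta>)) \<subseteq> gf3 \<and> poly (M \<beta>) \<beta> = 0 \<and>
      (\<forall>q. q \<noteq> 0 \<and> set (coeffs q) \<subseteq> gf3 \<and> poly q \<beta> = 0 \<longrightarrow> degree (M \<beta>) \<le> degree q)"
    using lead_M Kp_M poly_M orb_self M_min unfolding coeffs_Kp by blast
next
  fix p assume h: "lead_coeff p = 1 \<and> set (coeffs p) \<subseteq> gf3 \<and> poly p \<beta> = 0 \<and>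
      (\<forall>q. q \<noteq> 0 \<and> set (coeffs q) \<subseteq> gf3 \<and> poly q \<beta> = 0 \<longrightarrow> degree p \<le> degree q)"
  then have p0: "p \<noteq> 0" and Kp: "Kp p" and r: "poly p \<beta> = 0" using coeffs_Kp by auto
  have le1: "degree p \<le> degree (M \<beta>)" using h M_nz Kp_M poly_M orb_self unfolding coeffs_Kp by blast
  have le2: "degree (M \<beta>) \<le> degree p" using M_min[OF p0 Kp r] .
  have deq: "degree p = degree (M \<beta>)" using le1 le2 by simp
  show "p = M \<beta>"
  proof (rule ccontr)
    assume ne: "p \<noteq> M \<beta>"
    define r where "r = p - M \<beta>"
    have r0: "r \<noteq> 0" using ne r_def by simp
    have "coeff r i = 0" if "i \<ge> degree (M \<beta>)" for i
    proof (cases "i = degree (M \<beta>)")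
      case True
      then show ?thesis unfolding r_def using h lead_M deq by simp
    next
      case False
      then have "i > degree p" "i > degree (M \<beta>)" using that deq by auto
      then show ?thesis unfolding r_def by (simp add: coeff_eq_0)
    qed
    then have "degree r < degree (M \<beta>)"
      using r0 by (metis leading_coeff_0_iff not_le)
    moreover have "degree (M \<beta>) \<le> degree r"
      by (rule M_min) (use r0 Kp_diff[OF Kp Kp_M] r in \<open>simp_all add: r_def poly_M orb_self\<close>)
    ultimately show False by simp
  qed
qed

definition G :: "nat \<Rightarrow> (nat \<Rightarrow> 'a) \<Rightarrow> 'a poly" where
  "G k F = (\<Sum>i<k. Polynomial.monom (F i) i)"

lemma coeff_G: "coeff (G k F) j = (if j < k then F j else 0)"
  unfolding G_def by (simp add: coeff_sum coeff_monom)

lemma card_H: assumes "k > 0" shows "card {h::'a poly. Kp h \<and> degree h < k} = 3 ^ k"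
proof -
  let ?P = "PiE {..<k} (\<lambda>_. gf3 :: 'a set)"
  have inj: "inj_on (G k) ?P"
  proof
    fix F F' assume F: "F \<in> ?P" and F': "F' \<in> ?P" and eq: "G k F = G k F'"
    show "F = F'"
    proof
      fix j show "F j = F' j"
      proof (cases "j < k")
        case True then show ?thesis using arg_cong[OF eq, of "\<lambda>p. coeff p j"] by (simp add: coeff_G)
      next
        case False then show ?thesis using F F' by (simp add: PiE_def extensional_def)
      qed
    qed
  qed
  have img: "G k ` ?P = {h. Kp h \<and> degree h < k}"
  proof (intro set_eqI iffI)
    fix h assume "h \<in> G k ` ?P"
    then obtain F where F: "F \<in> ?P" and h: "h = G k F" by blast
    have "Kp h" unfolding Kp_def h coeff_G using F by (auto simp: gf3_0)
    moreover have "degree h \<le> k - 1"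
      by (rule degree_le) (use assms in \<open>auto simp: h coeff_G\<close>)
    ultimately show "h \<in> {h. Kp h \<and> degree h < k}" using assms by simp
  next
    fix h assume h: "h \<in> {h. Kp h \<and> degree h < k}"
    define F where "F = restrict (coeff h) {..<k}"
    have "F \<in> ?P" using h unfolding F_def Kp_def by auto
    moreover have "G k F = h"
    proof (rule poly_eqI)
      fix j show "coeff (G k F) j = coeff h j"
        using h by (auto simp: coeff_G F_def coeff_eq_0)
    qed
    ultimately show "h \<in> G k ` ?P" by blast
  qed
  have "card {h::'a poly. Kp h \<and> degree h < k} = card ?P" unfolding img[symmetric] by (rule card_image[OF inj])
  also have "\<dots> = 3 ^ k" by (simp add: card_PiE card_gf3)
  finally show ?thesis .
qed

lemma dvd_roots: "finite A \<Longrightarrow> (\<forall>\<gamma>\<in>A. poly c \<gamma> = 0) \<Longrightarrow> (\<Prod>\<gamma>\<in>A. [:- \<gamma>, 1:]) dvd (c::'a poly)"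
proof (induction A arbitrary: c rule: finite_induct)
  case empty then show ?case by simp
next
  case (insert \<delta> A)
  have "(\<Prod>\<gamma>\<in>A. [:- \<gamma>, 1:]) dvd c" using insert.IH insert.prems by simp
  then obtain r where r: "c = (\<Prod>\<gamma>\<in>A. [:- \<gamma>, 1:]) * r" by (elim dvdE)
  have "poly (\<Prod>\<gamma>\<in>A. [:- \<gamma>, 1:]) \<delta> \<noteq> 0" using insert(2) by (auto simp: poly_prod insert(1))
  moreover have "poly c \<delta> = 0" using insert by simp
  ultimately have "poly r \<delta> = 0" unfolding r by simp
  then have d: "[:- \<delta>, 1:] dvd r" by (simp add: poly_eq_0_iff_dvd)
  have pe: "(\<Prod>\<gamma>\<in>insert \<delta> A. [:- \<gamma>, 1:]) = [:- \<delta>, 1:] * (\<Prod>\<gamma>\<in>A. [:- \<gamma>, 1:])"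
    by (rule prod.insert[OF insert(1,2)])
  have "[:- \<delta>, 1:] * (\<Prod>\<gamma>\<in>A. [:- \<gamma>, 1:]) dvd r * (\<Prod>\<gamma>\<in>A. [:- \<gamma>, 1:])"
    by (rule mult_dvd_mono[OF d dvd_refl])
  then show ?case unfolding r pe by (simp only: mult.commute)
qed

definition g :: "'a poly" where "g = M \<alpha> * M (\<alpha> ^ e)"

lemma g_eq: "min_poly3 \<alpha> * min_poly3 (\<alpha> ^ e) = g" unfolding g_def min_poly3_eq ..

lemma g_prod: "g = (\<Prod>\<gamma>\<in>orb \<alpha> \<union> orb (\<alpha> ^ e). [:- \<gamma>, 1:])"
  unfolding g_def M_def by (rule prod.union_disjoint[symmetric]) (auto simp: finite_orb orb_disj)

lemma g_nz: "g \<noteq> 0" unfolding g_def using M_nz by simp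

lemma deg_g: "degree g = 2 * m"
  unfolding g_def using M_nz by (simp add: degree_mult_eq degree_M card_orb_alpha card_orb_beta)

lemma Kp_g: "Kp g" unfolding g_def by (intro Kp_mult Kp_M)

lemma n_gt: "2 * m < n"
proof -
  have "2 * k + 1 < 3 ^ k" if "k \<ge> 2" for k :: nat
    using that
  proof (induction k rule: dec_induct)
    case base then show ?case by simp
  next
    case (step k) then show ?case by simp
  qed
  from this[OF m_ge2] show ?thesis unfolding n_def by simp
qed

lemma code_eq: "code_1e (3 ^ m - 1) \<alpha> e = {c. Kp c \<and> degree c < n \<and> g dvd c}"
  unfolding code_1e_def cyclic_code_def g_eq n_def coeffs_Kp ..

lemma Kp_zero: "Kp 0" unfolding Kp_def by (simp add: gf3_0)

lemma card_code: "card {c. Kp c \<and> degree c < n \<and> g dvd c} = 3 ^ (n - 2 * m)"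
proof -
  let ?H = "{h::'a poly. Kp h \<and> degree h < n - 2 * m}"
  have k0: "n - 2 * m > 0" using n_gt by simp
  have inj: "inj_on (\<lambda>h. g * h) ?H" using g_nz by (auto simp: inj_on_def)
  have "(\<lambda>h. g * h) ` ?H = {c. Kp c \<and> degree c < n \<and> g dvd c}"
  proof (intro set_eqI iffI)
    fix c assume "c \<in> (\<lambda>h. g * h) ` ?H"
    then obtain h where h: "Kp h" "degree h < n - 2 * m" and c: "c = g * h" by blast
    have "Kp c" unfolding c using Kp_mult[OF Kp_g h(1)] .
    moreover have "degree c < n"
    proof (cases "h = 0")
      case True then show ?thesis unfolding c using n_gt by simp
    next
      case False then show ?thesis unfolding c using g_nz h(2) by (simp add: degree_mult_eq deg_g)
    qed
    ultimately show "c \<in> {c. Kp c \<and> degree c < n \<and> g dvd c}" unfolding c by simp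
  next
    fix c assume "c \<in> {c. Kp c \<and> degree c < n \<and> g dvd c}"
    then have c: "Kp c" "degree c < n" "g dvd c" by auto
    then obtain h where h: "c = g * h" by (elim dvdE)
    have "g * frob h = g * h" using c(1) Kp_g unfolding h Kp_frob frob_mult by simp
    then have "frob h = h" using g_nz by simp
    then have "Kp h" unfolding Kp_frob .
    moreover have "degree h < n - 2 * m"
    proof (cases "h = 0")
      case True then show ?thesis using k0 by simp
    next
      case False then show ?thesis using c(2) g_nz unfolding h by (simp add: degree_mult_eq deg_g)
    qed
    ultimately show "c \<in> (\<lambda>h. g * h) ` ?H" unfolding h by blast
  qed
  then have "card {c. Kp c \<and> degree c < n \<and> g dvd c} = card ?H" using card_image[OF inj] by simp
  also have "\<dots> = 3 ^ (n - 2 * m)" using card_H[OF k0] .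
  finally show ?thesis .
qed

lemma code_roots: "g dvd c \<Longrightarrow> poly c \<alpha> = 0 \<and> poly c (\<alpha> ^ e) = 0"
proof -
  assume "g dvd c"
  then obtain h where "c = g * h" by (elim dvdE)
  moreover have "poly g \<alpha> = 0" "poly g (\<alpha> ^ e) = 0" unfolding g_def by (simp_all add: poly_M orb_self)
  ultimately show ?thesis by simp
qed

lemma roots_code: assumes "Kp c" "poly c \<alpha> = 0" "poly c (\<alpha> ^ e) = 0" shows "g dvd c"
  unfolding g_prod
proof (rule dvd_roots)
  show "finite (orb \<alpha> \<union> orb (\<alpha> ^ e))" by (simp add: finite_orb)
  show "\<forall>\<gamma>\<in>orb \<alpha> \<union> orb (\<alpha> ^ e). poly c \<gamma> = 0"
  proof
    fix \<gamma> assume "\<gamma> \<in> orb \<alpha> \<union> orb (\<alpha> ^ e)"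
    then obtain \<beta> t where "\<beta> = \<alpha> \<or> \<beta> = \<alpha> ^ e" "\<gamma> = \<beta> ^ (3 ^ t)" unfolding orb_def by blast
    then show "poly c \<gamma> = 0" using poly_frob[OF assms(1)] assms(2,3) by auto
  qed
qed

lemma supp_sub: "{i. coeff c i \<noteq> 0} \<subseteq> {..degree c}"
  using le_degree by auto

lemma finite_supp: "finite {i. coeff c i \<noteq> 0}"
  using supp_sub finite_subset by blast

lemma poly_supp: "poly c (x::'a) = (\<Sum>i\<in>{i. coeff c i \<noteq> 0}. coeff c i * x ^ i)"
proof -
  have "poly c x = (\<Sum>i\<le>degree c. coeff c i * x ^ i)" by (rule poly_altdef)
  also have "\<dots> = (\<Sum>i\<in>{i. coeff c i \<noteq> 0}. coeff c i * x ^ i)"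
    by (rule sum.mono_neutral_right) (use supp_sub in auto)
  finally show ?thesis .
qed

lemma supp_lt: "degree c < n \<Longrightarrow> i \<in> {i. coeff c i \<noteq> 0} \<Longrightarrow> i < n"
  using supp_sub[of c] by auto

lemma coeff_pm: "Kp c \<Longrightarrow> coeff c i \<noteq> 0 \<Longrightarrow> coeff c i \<in> {1, -1}"
  unfolding Kp_def using gf3_iff by auto

lemma alpha_pow_nz: "\<alpha> ^ i \<noteq> 0" using alpha_nz by simp

lemma no_low_weight: assumes "Kp c" "degree c < n" "g dvd c" "c \<noteq> 0" "hamming_wt c \<le> 3"
  shows False
proof -
  define S where "S = {i. coeff c i \<noteq> 0}"
  have fS: "finite S" unfolding S_def by (rule finite_supp)
  have Sn: "i \<in> S \<Longrightarrow> i < n" for i using supp_lt[OF assms(2)] unfolding S_def by blast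
  have pm: "i \<in> S \<Longrightarrow> coeff c i \<in> {1, -1}" for i using coeff_pm[OF assms(1)] unfolding S_def by blast
  have Sne: "S \<noteq> {}" using assms(4) unfolding S_def by (auto intro: poly_eqI)
  have cS: "card S \<le> 3" using assms(5) unfolding hamming_wt_def S_def .
  have r1: "(\<Sum>i\<in>S. coeff c i * \<alpha> ^ i) = 0" using code_roots[OF assms(3)] poly_supp unfolding S_def by metis
  have r2: "(\<Sum>i\<in>S. coeff c i * (\<alpha> ^ i) ^ e) = 0"
    using code_roots[OF assms(3)] poly_supp[of c "\<alpha> ^ e"] unfolding S_def by (simp add: pow_comm)
  have dist: "i \<in> S \<Longrightarrow> j \<in> S \<Longrightarrow> i \<noteq> j \<Longrightarrow> \<alpha> ^ i \<noteq> \<alpha> ^ j" for i j using alpha_inj Sn by blast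
  have "card S = 1 \<or> card S = 2 \<or> card S = 3" using cS Sne fS by (cases "card S") (auto simp: card_eq_0_iff)
  then show False
  proof (elim disjE)
    assume "card S = 1"
    then obtain i where S: "S = {i}" by (auto simp: card_Suc_eq)
    then have "coeff c i * \<alpha> ^ i = 0" using r1 by simp
    then show False using pm[of i] S alpha_pow_nz[of i] by auto
  next
    assume "card S = 2"
    then obtain i j where S: "S = {i, j}" "i \<noteq> j" by (auto simp: card_2_iff)
    show False
      by (rule W2[of "\<alpha> ^ i" "\<alpha> ^ j" "coeff c i" "coeff c j"])
         (use S r1 r2 pm dist alpha_pow_nz in auto)
  next
    assume "card S = 3"
    then obtain i j k where S: "S = {i, j, k}" "i \<noteq> j" "j \<noteq> k" "i \<noteq> k" by (auto simp: card_3_iff)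
    show False
      by (rule W3[of "\<alpha> ^ i" "\<alpha> ^ j" "\<alpha> ^ k" "coeff c i" "coeff c j" "coeff c k"])
         (use S r1 r2 pm dist alpha_pow_nz in \<open>auto simp: add.assoc\<close>)
  qed
qed

lemma wt4: "\<exists>c. Kp c \<and> degree c < n \<and> g dvd c \<and> c \<noteq> 0 \<and> hamming_wt c = 4"
proof -
  obtain p1 p2 p3 p4 :: 'a where p: "p1 \<noteq> 0" "p2 \<noteq> 0" "p3 \<noteq> 0" "p4 \<noteq> 0"
    "p1 \<noteq> p2" "p1 \<noteq> p3" "p1 \<noteq> p4" "p2 \<noteq> p3" "p2 \<noteq> p4" "p3 \<noteq> p4"
    "p1 + p2 - p3 - p4 = 0" "p1 ^ e + p2 ^ e - p3 ^ e - p4 ^ e = 0"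
    using conf4 by blast
  obtain i1 where i1: "i1 < n" "p1 = \<alpha> ^ i1" using ind_ex p(1) by blast
  obtain i2 where i2: "i2 < n" "p2 = \<alpha> ^ i2" using ind_ex p(2) by blast
  obtain i3 where i3: "i3 < n" "p3 = \<alpha> ^ i3" using ind_ex p(3) by blast
  obtain i4 where i4: "i4 < n" "p4 = \<alpha> ^ i4" using ind_ex p(4) by blast
  have d: "i1 \<noteq> i2" "i1 \<noteq> i3" "i1 \<noteq> i4" "i2 \<noteq> i3" "i2 \<noteq> i4" "i3 \<noteq> i4"
    using p(5-10) i1 i2 i3 i4 by auto
  define c :: "'a poly" where "c = Polynomial.monom 1 i1 + Polynomial.monom 1 i2 - Polynomial.monom 1 i3 - Polynomial.monom 1 i4"
  have cc: "coeff c j = (if j = i1 \<or> j = i2 then 1 else if j = i3 \<or> j = i4 then -1 else 0)" for j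
    unfolding c_def using d by (auto simp: coeff_monom)
  have supp: "{j. coeff c j \<noteq> 0} = {i1, i2, i3, i4}" using cc one_ne_m1 by auto
  have Kc: "Kp c" unfolding Kp_def cc by (simp add: gf3_iff)
  have dc: "degree c < n"
  proof -
    have "degree c \<le> n - 1" by (rule degree_le) (use i1 i2 i3 i4 in \<open>auto simp: cc\<close>)
    then show ?thesis using n_pos by simp
  qed
  have pc: "poly c x = x ^ i1 + x ^ i2 - x ^ i3 - x ^ i4" for x unfolding c_def by (simp add: poly_monom)
  have "poly c \<alpha> = 0" unfolding pc using p(11) i1 i2 i3 i4 by simp
  moreover have "poly c (\<alpha> ^ e) = 0" unfolding pc using p(12) i1 i2 i3 i4 by (simp add: pow_comm)
  ultimately have gd: "g dvd c" using roots_code[OF Kc] by blast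
  have hw: "hamming_wt c = 4" unfolding hamming_wt_def supp using d by simp
  have "c \<noteq> 0" using cc[of i1] by auto
  then show ?thesis using Kc dc gd hw by blast
qed

lemma final: "has_params (code_1e (3 ^ m - 1) \<alpha> e) (3 ^ m - 1) (3 ^ m - 1 - 2 * m) 4"
proof -
  let ?C = "code_1e (3 ^ m - 1) \<alpha> e"
  have C: "?C = {c. Kp c \<and> degree c < n \<and> g dvd c}" by (rule code_eq)
  have p1: "\<forall>c\<in>?C. degree c < 3 ^ m - 1 \<and> set (coeffs c) \<subseteq> gf3"
    unfolding C coeffs_Kp n_def by auto
  have p2: "card ?C = 3 ^ (3 ^ m - 1 - 2 * m)" unfolding C card_code by (simp add: n_def)
  have finC: "finite ?C" using p2 card_ge_0_finite by (metis card.infinite zero_less_numeral zero_less_power)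
  let ?W = "{hamming_wt c |c. c \<in> ?C \<and> c \<noteq> 0}"
  have finW: "finite ?W"
  proof -
    have "?W = hamming_wt ` {c \<in> ?C. c \<noteq> 0}" by auto
    then show ?thesis using finC by simp
  qed
  have ge: "4 \<le> w" if "w \<in> ?W" for w
  proof -
    obtain c where c: "w = hamming_wt c" "c \<in> ?C" "c \<noteq> 0" using \<open>w \<in> ?W\<close> by blast
    then have "Kp c" "degree c < n" "g dvd c" unfolding C by auto
    then have "\<not> hamming_wt c \<le> 3" using no_low_weight c(3) by blast
    then show ?thesis using c(1) by simp
  qed
  obtain c where "Kp c" "degree c < n" "g dvd c" "c \<noteq> 0" "hamming_wt c = 4" using wt4 by blast
  then have "4 \<in> ?W" unfolding C by auto
  then have "Min ?W = 4" using Min_eqI[OF finW ge] by blast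
  then show ?thesis unfolding has_params_def using p1 p2 by simp
qed

end

theorem theorem5:
  fixes \<alpha> :: "'a::{field,finite}" and m e :: nat
  assumes "m > 0"
    and "card (UNIV :: 'a set) = 3 ^ m"
    and "\<forall>x::'a. x \<noteq> 0 \<longrightarrow> (\<exists>k. x = \<alpha> ^ k)"
    and "1 < e" and "e < 3 ^ m - 1"
    and "APN (\<lambda>x::'a. x ^ e)"
  shows "has_params (code_1e (3 ^ m - 1) \<alpha> e) (3 ^ m - 1) (3 ^ m - 1 - 2 * m) 4"
proof -
  interpret ctx \<alpha> m e using assms by unfold_locales
  show ?thesis by (rule final)
qed

end
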